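(* Let $D\subset\mathfrak{so}(7)$ be the Lie algebra of derivations of the octonions restricted to the imaginary octonions $\operatorname{Im}(\mathbb O)\cong\mathbb R^7$ (the 7-dimensional fundamental representation of $\mathfrak g_2$, realized by real antisymmetric $7\times7$ matrices), and let $\beta_1,\dots,\beta_{14}$ be a basis of $iD$ (Hermitian $7\times7$ matrices) with $\operatorname{Tr}(\beta_a\beta_b)=\frac12\delta_{ab}$. Then $\sum_{i=1}^{14}\beta_i^2=\mathbf 1_7$ and $\sum_{i=1}^{14}\beta_i\beta_a\beta_i=0$ for every $a$. Consequently, for $p\in[0,1]$ the $\mathfrak g_2$ channel $\Phi(\rho)=(1-p)\rho+p\sum_{i=1}^{14}\beta_i\rho\beta_i$ satisfies, for every $v\in\mathbb R^{14}$, $$\Phi\Big(\tfrac17(\mathbf 1_7+v\cdot\beta)\Big)=\tfrac17\big(\mathbf 1_7+(1-p)\,v\cdot\beta\big).$$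
   Context: $v\cdot\beta=\sum_{i=1}^{14}v_i\beta_i$. A derivation $D$ of an algebra satisfies $D(xy)=D(x)y+xD(y)$; $\mathfrak g_2$ is the derivation algebra of the octonions $\mathbb O$ and it preserves $\operatorname{Im}(\mathbb O)$. *)

theory Defs
  imports "HOL-Analysis.Analysis" "HOL-Library.Numeral_Type"
begin

text \<open>Octonions realised as R + Im(O) = real \<times> real^7, with imaginary units
  e_0,...,e_6 (indices in the ring Z/7 = type 7) and multiplication table
  e_n e_(n+1) = e_(n+3) (Fano plane), cyclically; e_n e_n = -1.\<close>

type_synonym octonion = "real \<times> (real^7)"

definition oct_pos_triple :: "7 \<Rightarrow> 7 \<Rightarrow> 7 \<Rightarrow> bool" where
  "oct_pos_triple i j k \<longleftrightarrow> (\<exists>n::7.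
      (i, j, k) = (n, n + 1, n + 3) \<or> (i, j, k) = (n + 1, n + 3, n) \<or> (i, j, k) = (n + 3, n, n + 1))"

definition oct_eps :: "7 \<Rightarrow> 7 \<Rightarrow> 7 \<Rightarrow> real" where
  "oct_eps i j k = (if oct_pos_triple i j k then 1 else if oct_pos_triple j i k then -1 else 0)"

definition cross7 :: "real^7 \<Rightarrow> real^7 \<Rightarrow> real^7" where
  "cross7 u w = (\<chi> k. \<Sum>i\<in>UNIV. \<Sum>j\<in>UNIV. oct_eps i j k * u$i * w$j)"

definition oct_mult :: "octonion \<Rightarrow> octonion \<Rightarrow> octonion" where
  "oct_mult x y = (fst x * fst y - inner (snd x) (snd y),
                   fst x *\<^sub>R snd y + fst y *\<^sub>R snd x + cross7 (snd x) (snd y))"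

definition oct_derivation :: "(octonion \<Rightarrow> octonion) \<Rightarrow> bool" where
  "oct_derivation D \<longleftrightarrow> linear D \<and>
     (\<forall>x y. D (oct_mult x y) = oct_mult (D x) y + oct_mult x (D y))"

definition g2_D :: "(real^7^7) set" where
  "g2_D = {A. \<exists>Der. oct_derivation Der \<and> (\<forall>x. Der (0, x) = (0, A *v x))}"

definition g2_iD :: "(complex^7^7) set" where
  "g2_iD = {(\<chi> r s. \<i> * complex_of_real (A$r$s)) | A. A \<in> g2_D}"

definition is_real_basis_of :: "(14 \<Rightarrow> complex^7^7) \<Rightarrow> (complex^7^7) set \<Rightarrow> bool" where
  "is_real_basis_of \<beta> V \<longleftrightarrow> (\<forall>i. \<beta> i \<in> V)
     \<and> (\<forall>X\<in>V. \<exists>c::14 \<Rightarrow> real. X = (\<Sum>i\<in>UNIV. c i *\<^sub>R \<beta> i))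
     \<and> (\<forall>c::14 \<Rightarrow> real. (\<Sum>i\<in>UNIV. c i *\<^sub>R \<beta> i) = 0 \<longrightarrow> (\<forall>i. c i = 0))"

definition vdot_beta :: "real^14 \<Rightarrow> (14 \<Rightarrow> complex^7^7) \<Rightarrow> complex^7^7" where
  "vdot_beta v \<beta> = (\<Sum>i\<in>UNIV. v$i *\<^sub>R \<beta> i)"

definition g2_channel :: "(14 \<Rightarrow> complex^7^7) \<Rightarrow> real \<Rightarrow> complex^7^7 \<Rightarrow> complex^7^7" where
  "g2_channel \<beta> p \<rho> = (1 - p) *\<^sub>R \<rho> + p *\<^sub>R (\<Sum>i\<in>UNIV. \<beta> i ** \<rho> ** \<beta> i)"

end

theory Submission
  imports Defs
begin

lemma exhaust_7:
  fixes x :: 7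
  shows "x = 0 \<or> x = 1 \<or> x = 2 \<or> x = 3 \<or> x = 4 \<or> x = 5 \<or> x = 6"
proof (induct x)
  case (of_int z)
  then have "z = 0 \<or> z = 1 \<or> z = 2 \<or> z = 3 \<or> z = 4 \<or> z = 5 \<or> z = 6" by fastforce
  then show ?case by auto
qed

lemma UNIV_7: "(UNIV::7 set) = {0,1,2,3,4,5,6}"
  using exhaust_7 by auto

lemma sum_7: "sum f (UNIV::7 set) = f 0 + f 1 + f 2 + f 3 + f 4 + f 5 + f 6"
  unfolding UNIV_7 by (simp add: ac_simps)

lemma forall_7: "(\<forall>i::7. P i) \<longleftrightarrow> P 0 \<and> P 1 \<and> P 2 \<and> P 3 \<and> P 4 \<and> P 5 \<and> P 6"
  by (metis exhaust_7)

lemma exhaust_14: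
  fixes x :: 14
  shows "x = 0 \<or> x = 1 \<or> x = 2 \<or> x = 3 \<or> x = 4 \<or> x = 5 \<or> x = 6 \<or> x = 7 \<or> x = 8 \<or> x = 9 \<or> x = 10 \<or> x = 11 \<or> x = 12 \<or> x = 13"
proof (induct x)
  case (of_int z)
  then have "0 \<le> z" "z < 14" by simp_all
  then have "z = 0 \<or> z = 1 \<or> z = 2 \<or> z = 3 \<or> z = 4 \<or> z = 5 \<or> z = 6 \<or> z = 7 \<or> z = 8 \<or> z = 9 \<or> z = 10 \<or> z = 11 \<or> z = 12 \<or> z = 13" by presburger
  then show ?case by auto
qed

lemma UNIV_14: "(UNIV::14 set) = {0,1,2,3,4,5,6,7,8,9,10,11,12,13}"
  using exhaust_14 by auto

lemma sum_14: "sum f (UNIV::14 set) = f 0 + f 1 + f 2 + f 3 + f 4 + f 5 + f 6 + f 7 + f 8 + f 9 + f 10 + f 11 + f 12 + f 13"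
  unfolding UNIV_14 by (simp add: ac_simps)

lemma forall_14: "(\<forall>i::14. P i) \<longleftrightarrow> P 0 \<and> P 1 \<and> P 2 \<and> P 3 \<and> P 4 \<and> P 5 \<and> P 6 \<and> P 7 \<and> P 8 \<and> P 9 \<and> P 10 \<and> P 11 \<and> P 12 \<and> P 13"
  by (metis exhaust_14)

definition pos7 :: "7 \<Rightarrow> nat" where
  "pos7 t = (if t = 0 then 0 else if t = 1 then 1 else if t = 2 then 2 else if t = 3 then 3
     else if t = 4 then 4 else if t = 5 then 5 else 6)"

lemma pos7_simps: "pos7 0 = 0" "pos7 1 = 1" "pos7 2 = 2" "pos7 3 = 3" "pos7 4 = 4" "pos7 5 = 5" "pos7 6 = 6"
  by (simp_all add: pos7_def)

lemma pos7_lt: "pos7 t < 7"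
  by (simp add: pos7_def)

lemma pos7_inj: "pos7 r = pos7 s \<longleftrightarrow> r = s"
  using exhaust_7[of r] exhaust_7[of s] by (auto simp: pos7_simps)

lemma sum_upto7: "(\<Sum>n::nat<7. f n) = f 0 + f 1 + f 2 + f 3 + f 4 + f 5 + (f 6::'a::comm_monoid_add)"
  by (simp add: eval_nat_numeral ac_simps)

lemma sum_pos7: "(\<Sum>t\<in>UNIV. f (pos7 t)) = (\<Sum>n<7. f n)"
  by (simp add: sum_7 sum_upto7 pos7_simps)

definition pos14 :: "14 \<Rightarrow> nat" where
  "pos14 t = (if t = 0 then 0 else if t = 1 then 1 else if t = 2 then 2 else if t = 3 then 3
     else if t = 4 then 4 else if t = 5 then 5 else if t = 6 then 6 else if t = 7 then 7
     else if t = 8 then 8 else if t = 9 then 9 else if t = 10 then 10 else if t = 11 then 11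
     else if t = 12 then 12 else 13)"

lemma pos14_simps: "pos14 0 = 0" "pos14 1 = 1" "pos14 2 = 2" "pos14 3 = 3" "pos14 4 = 4" "pos14 5 = 5" "pos14 6 = 6"
  "pos14 7 = 7" "pos14 8 = 8" "pos14 9 = 9" "pos14 10 = 10" "pos14 11 = 11" "pos14 12 = 12" "pos14 13 = 13"
  by (simp_all add: pos14_def)

lemma pos14_lt: "pos14 t < 14"
  by (simp add: pos14_def)

lemma pos14_inj: "pos14 r = pos14 s \<longleftrightarrow> r = s"
  using exhaust_14[of r] exhaust_14[of s] by (auto simp: pos14_simps)

lemma sum_upto14: "(\<Sum>n::nat<14. f n) = f 0 + f 1 + f 2 + f 3 + f 4 + f 5 + f 6 + f 7 + f 8 + f 9 + f 10 + f 11 + f 12 + (f 13::'a::comm_monoid_add)"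
  by (simp add: eval_nat_numeral ac_simps)

lemma sum_pos14: "(\<Sum>t\<in>UNIV. f (pos14 t)) = (\<Sum>n<14. f n)"
  by (simp add: sum_14 sum_upto14 pos14_simps)

subsection \<open>Integer list matrices\<close>

definition mm :: "int list list \<Rightarrow> int list list \<Rightarrow> int list list" where
  "mm A B = map (\<lambda>row. map (\<lambda>j. sum_list (map2 (*) row (map (\<lambda>r. r ! j) B))) [0..<7]) A"
definition madd :: "int list list \<Rightarrow> int list list \<Rightarrow> int list list" where
  "madd A B = map2 (map2 (+)) A B"
definition smul :: "int \<Rightarrow> int list list \<Rightarrow> int list list" where
  "smul c A = map (map ((*) c)) A"
definition zero7 :: "int list list" where "zero7 = replicate 7 (replicate 7 0)"
definition id7 :: "int list list" where
  "id7 = [[1,0,0,0,0,0,0],[0,1,0,0,0,0,0],[0,0,1,0,0,0,0],[0,0,0,1,0,0,0],[0,0,0,0,1,0,0],[0,0,0,0,0,1,0],[0,0,0,0,0,0,1]]"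
definition lsum :: "(nat \<Rightarrow> int list list) \<Rightarrow> nat \<Rightarrow> int list list" where
  "lsum f n = foldl (\<lambda>acc i. madd acc (f i)) zero7 [0..<n]"
definition trl :: "int list list \<Rightarrow> int" where
  "trl A = sum_list (map (\<lambda>i. A ! i ! i) [0..<7])"
definition wf7 :: "int list list \<Rightarrow> bool" where
  "wf7 A \<longleftrightarrow> length A = 7 \<and> (\<forall>row\<in>set A. length row = 7)"

definition Mt :: "int list list list" where
  "Mt = [[[0, 0, 0, 0, 0, 0, 0], [0, 0, 0, -1, 0, 0, 0], [0, 0, 0, 0, 0, 0, 0], [0, 1, 0, 0, 0, 0, 0], [0, 0, 0, 0, 0, 1, 0], [0, 0, 0, 0, -1, 0, 0], [0, 0, 0, 0, 0, 0, 0]],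
   [[0, 0, 0, 0, 0, 0, 0], [0, 0, 0, 1, 0, 0, 0], [0, 0, 0, 0, 0, 0, -2], [0, -1, 0, 0, 0, 0, 0], [0, 0, 0, 0, 0, 1, 0], [0, 0, 0, 0, -1, 0, 0], [0, 0, 2, 0, 0, 0, 0]],
   [[0, 0, 0, 0, 0, 0, 0], [0, 0, 0, 0, 0, 0, 0], [0, 0, 0, 0, -1, 0, 0], [0, 0, 0, 0, 0, 0, 0], [0, 0, 1, 0, 0, 0, 0], [0, 0, 0, 0, 0, 0, 1], [0, 0, 0, 0, 0, -1, 0]],
   [[0, 0, 0, 2, 0, 0, 0], [0, 0, 0, 0, 0, 0, 0], [0, 0, 0, 0, 1, 0, 0], [-2, 0, 0, 0, 0, 0, 0], [0, 0, -1, 0, 0, 0, 0], [0, 0, 0, 0, 0, 0, 1], [0, 0, 0, 0, 0, -1, 0]],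
   [[0, 0, 0, 0, 0, 0, -1], [0, 0, 0, 0, 0, 0, 0], [0, 0, 0, 0, 0, 0, 0], [0, 0, 0, 0, 0, -1, 0], [0, 0, 0, 0, 0, 0, 0], [0, 0, 0, 1, 0, 0, 0], [1, 0, 0, 0, 0, 0, 0]],
   [[0, 0, 0, 0, 0, 0, -1], [0, 0, 0, 0, 2, 0, 0], [0, 0, 0, 0, 0, 0, 0], [0, 0, 0, 0, 0, 1, 0], [0, -2, 0, 0, 0, 0, 0], [0, 0, 0, -1, 0, 0, 0], [1, 0, 0, 0, 0, 0, 0]],
   [[0, 1, 0, 0, 0, 0, 0], [-1, 0, 0, 0, 0, 0, 0], [0, 0, 0, 0, 0, 0, 0], [0, 0, 0, 0, 0, 0, 0], [0, 0, 0, 0, 0, 0, -1], [0, 0, 0, 0, 0, 0, 0], [0, 0, 0, 0, 1, 0, 0]],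
   [[0, 1, 0, 0, 0, 0, 0], [-1, 0, 0, 0, 0, 0, 0], [0, 0, 0, 0, 0, 2, 0], [0, 0, 0, 0, 0, 0, 0], [0, 0, 0, 0, 0, 0, 1], [0, 0, -2, 0, 0, 0, 0], [0, 0, 0, 0, -1, 0, 0]],
   [[0, 0, 0, 0, 0, 1, 0], [0, 0, 1, 0, 0, 0, 0], [0, -1, 0, 0, 0, 0, 0], [0, 0, 0, 0, 0, 0, 0], [0, 0, 0, 0, 0, 0, 0], [-1, 0, 0, 0, 0, 0, 0], [0, 0, 0, 0, 0, 0, 0]],
   [[0, 0, 0, 0, 0, -1, 0], [0, 0, 1, 0, 0, 0, 0], [0, -1, 0, 0, 0, 0, 0], [0, 0, 0, 0, 0, 0, 2], [0, 0, 0, 0, 0, 0, 0], [1, 0, 0, 0, 0, 0, 0], [0, 0, 0, -2, 0, 0, 0]],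
   [[0, 0, 0, 0, 0, 0, 0], [0, 0, 0, 0, 0, 0, 1], [0, 0, 0, 1, 0, 0, 0], [0, 0, -1, 0, 0, 0, 0], [0, 0, 0, 0, 0, 0, 0], [0, 0, 0, 0, 0, 0, 0], [0, -1, 0, 0, 0, 0, 0]],
   [[0, 0, 0, 0, -2, 0, 0], [0, 0, 0, 0, 0, 0, -1], [0, 0, 0, 1, 0, 0, 0], [0, 0, -1, 0, 0, 0, 0], [2, 0, 0, 0, 0, 0, 0], [0, 0, 0, 0, 0, 0, 0], [0, 1, 0, 0, 0, 0, 0]],
   [[0, 0, -1, 0, 0, 0, 0], [0, 0, 0, 0, 0, 0, 0], [1, 0, 0, 0, 0, 0, 0], [0, 0, 0, 0, 1, 0, 0], [0, 0, 0, -1, 0, 0, 0], [0, 0, 0, 0, 0, 0, 0], [0, 0, 0, 0, 0, 0, 0]],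
   [[0, 0, 1, 0, 0, 0, 0], [0, 0, 0, 0, 0, -2, 0], [-1, 0, 0, 0, 0, 0, 0], [0, 0, 0, 0, 1, 0, 0], [0, 0, 0, -1, 0, 0, 0], [0, 2, 0, 0, 0, 0, 0], [0, 0, 0, 0, 0, 0, 0]]]"

definition cw :: "nat \<Rightarrow> int" where "cw n = (if even n then 3 else 1)"

lemma comp_orth: "list_all (\<lambda>a. list_all (\<lambda>b. trl (mm (Mt!a) (Mt!b)) = (if a = b then (if even a then -4 else -12) else 0)) [0..<14]) [0..<14]"
  by code_simp

lemma comp_cas1: "lsum (\<lambda>n. smul (cw n) (mm (Mt!n) (Mt!n))) 14 = smul (-24) id7"
  by code_simp

lemma comp_cas2: "list_all (\<lambda>k. lsum (\<lambda>n. smul (cw n) (mm (mm (Mt!n) (Mt!k)) (Mt!n))) 14 = zero7) [0..<14]"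
  by code_simp

lemma comp_wf: "list_all (\<lambda>k. wf7 (Mt!k)) [0..<14]"
  by code_simp

lemma sum_list_map2_mult:
  assumes "length xs = n" "length ys = n"
  shows "sum_list (map2 (*) xs ys) = (\<Sum>i<n. xs ! i * ys ! i)"
proof -
  have "sum_list (map2 (*) xs ys) = (\<Sum>i<length (map2 (*) xs ys). (map2 (*) xs ys) ! i)"
    by (simp add: sum_list_sum_nth atLeast0LessThan)
  also have "\<dots> = (\<Sum>i<n. xs ! i * ys ! i)"
    using assms by (intro sum.cong) auto
  finally show ?thesis .
qed

definition L :: "int list list \<Rightarrow> real^7^7" where
  "L A = (\<chi> r s. real_of_int (A ! pos7 r ! pos7 s))"

lemma L_comp: "L A $ r $ s = real_of_int (A ! pos7 r ! pos7 s)"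
  by (simp add: L_def)

lemma L_eqI: "(\<And>i j. i < 7 \<Longrightarrow> j < 7 \<Longrightarrow> A ! i ! j = B ! i ! j) \<Longrightarrow> L A = L B"
  by (simp add: vec_eq_iff L_comp pos7_lt)

lemma wf_nth: "wf7 A \<Longrightarrow> i < 7 \<Longrightarrow> length (A ! i) = 7"
  by (simp add: wf7_def)

lemma mm_nth: "wf7 A \<Longrightarrow> wf7 B \<Longrightarrow> i < 7 \<Longrightarrow> j < 7 \<Longrightarrow> mm A B ! i ! j = (\<Sum>n<7. A ! i ! n * B ! n ! j)"
  by (simp add: mm_def wf7_def sum_list_map2_mult)

lemma L_mult: "wf7 A \<Longrightarrow> wf7 B \<Longrightarrow> L A ** L B = L (mm A B)"
  unfolding vec_eq_iff
proof (intro allI)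
  fix r s
  assume a: "wf7 A" "wf7 B"
  have "(L A ** L B) $ r $ s = (\<Sum>t\<in>UNIV. real_of_int (A ! pos7 r ! pos7 t * B ! pos7 t ! pos7 s))"
    by (simp add: matrix_matrix_mult_def L_comp)
  also have "\<dots> = (\<Sum>n<7. real_of_int (A ! pos7 r ! n * B ! n ! pos7 s))"
    by (rule sum_pos7)
  also have "\<dots> = L (mm A B) $ r $ s"
    using a by (simp add: L_comp mm_nth pos7_lt)
  finally show "(L A ** L B) $ r $ s = L (mm A B) $ r $ s" .
qed

lemma wf_mm: "wf7 A \<Longrightarrow> wf7 (mm A B)"
  by (auto simp: wf7_def mm_def)

lemma wf_madd: "wf7 A \<Longrightarrow> wf7 B \<Longrightarrow> wf7 (madd A B)"
  by (auto simp: wf7_def madd_def set_zip)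

lemma wf_smul: "wf7 A \<Longrightarrow> wf7 (smul c A)"
  by (auto simp: wf7_def smul_def)

lemma wf_zero7: "wf7 zero7"
  by (simp add: wf7_def zero7_def)

lemma L_add: "wf7 A \<Longrightarrow> wf7 B \<Longrightarrow> L A + L B = L (madd A B)"
  by (simp add: vec_eq_iff L_comp madd_def wf7_def pos7_lt)

lemma L_smul: "wf7 A \<Longrightarrow> real_of_int c *\<^sub>R L A = L (smul c A)"
  by (simp add: vec_eq_iff L_comp smul_def wf7_def pos7_lt)

lemma L_zero7: "L zero7 = 0"
  by (simp add: vec_eq_iff L_comp zero7_def pos7_lt)

lemma L_id7: "L id7 = mat 1"
  unfolding vec_eq_iff forall_7 by (simp add: L_comp mat_def id7_def pos7_simps)

lemma lsum_Suc: "lsum f (Suc n) = madd (lsum f n) (f n)"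
  by (simp add: lsum_def)

lemma L_lsum: "(\<And>i. i < n \<Longrightarrow> wf7 (f i)) \<Longrightarrow> wf7 (lsum f n) \<and> L (lsum f n) = (\<Sum>i<n. L (f i))"
proof (induction n)
  case 0
  then show ?case by (simp add: lsum_def wf_zero7 L_zero7)
next
  case (Suc n)
  then have ih: "wf7 (lsum f n)" "L (lsum f n) = (\<Sum>i<n. L (f i))" by auto
  have wfn: "wf7 (f n)" using Suc.prems by auto
  show ?case
    using ih wfn by (simp add: lsum_Suc wf_madd L_add[symmetric])
qed

lemma trace_L: "trace (L A) = real_of_int (trl A)"
proof -
  have "trace (L A) = (\<Sum>t\<in>UNIV. real_of_int (A ! pos7 t ! pos7 t))"
    by (simp add: trace_def L_comp)
  also have "\<dots> = (\<Sum>n<7. real_of_int (A ! n ! n))"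
    by (rule sum_pos7)
  also have "\<dots> = real_of_int (trl A)"
    by (simp add: trl_def sum_list_sum_nth atLeast0LessThan)
  finally show ?thesis .
qed

definition M :: "14 \<Rightarrow> real^7^7" where "M j = L (Mt ! pos14 j)"
definition gg :: "14 \<Rightarrow> real" where "gg j = (if even (pos14 j) then 4 else 12)"
definition ww :: "14 \<Rightarrow> real" where "ww j = real_of_int (cw (pos14 j)) / 24"

lemma ww_gg: "ww j = 1 / (2 * gg j)"
  by (simp add: ww_def gg_def cw_def)

lemma gg_pos: "gg j > 0"
  by (simp add: gg_def)

lemma wf_Mt: "n < 14 \<Longrightarrow> wf7 (Mt ! n)"
  using comp_wf by (simp add: list_all_iff)

lemma wf_Mt_pos: "wf7 (Mt ! pos14 j)"
  using wf_Mt pos14_lt by blast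

lemma M_orth: "trace (M j ** M k) = (if j = k then - gg j else 0)"
proof -
  have "trace (M j ** M k) = real_of_int (trl (mm (Mt ! pos14 j) (Mt ! pos14 k)))"
    by (simp add: M_def L_mult wf_Mt_pos trace_L)
  also have "\<dots> = (if j = k then - gg j else 0)"
    using comp_orth pos14_lt[of j] pos14_lt[of k]
    by (simp add: list_all_iff gg_def pos14_inj)
  finally show ?thesis .
qed

lemma cas1: "(\<Sum>j\<in>UNIV. ww j *\<^sub>R (M j ** M j)) = - mat 1"
proof -
  let ?f = "\<lambda>n. smul (cw n) (mm (Mt!n) (Mt!n))"
  have wfs: "\<And>n. n < 14 \<Longrightarrow> wf7 (?f n)"
    by (simp add: wf_smul wf_mm wf_Mt)
  have "(\<Sum>j\<in>UNIV. ww j *\<^sub>R (M j ** M j)) = (\<Sum>j\<in>UNIV. (1/24) *\<^sub>R L (?f (pos14 j)))"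
    by (intro sum.cong refl)
       (simp add: ww_def M_def L_mult wf_Mt_pos wf_mm L_smul[symmetric])
  also have "\<dots> = (1/24) *\<^sub>R (\<Sum>n<14. L (?f n))"
    by (simp add: scaleR_sum_right[symmetric] sum_pos14[where f = "\<lambda>n. L (?f n)"])
  also have "\<dots> = (1/24) *\<^sub>R L (lsum ?f 14)"
    using L_lsum[of 14 ?f] wfs by simp
  also have "\<dots> = (1/24) *\<^sub>R L (smul (-24) id7)"
    by (simp add: comp_cas1)
  also have "\<dots> = - mat 1"
  proof -
    have wfid: "wf7 id7" by (simp add: wf7_def id7_def)
    show ?thesis by (simp add: L_smul[OF wfid, symmetric] L_id7)
  qed
  finally show ?thesis .
qed

lemma cas2: "(\<Sum>j\<in>UNIV. ww j *\<^sub>R (M j ** M k ** M j)) = 0"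
proof -
  let ?f = "\<lambda>n. smul (cw n) (mm (mm (Mt!n) (Mt ! pos14 k)) (Mt!n))"
  have wfs: "\<And>n. n < 14 \<Longrightarrow> wf7 (?f n)"
    by (simp add: wf_smul wf_mm wf_Mt)
  have "(\<Sum>j\<in>UNIV. ww j *\<^sub>R (M j ** M k ** M j)) = (\<Sum>j\<in>UNIV. (1/24) *\<^sub>R L (?f (pos14 j)))"
    by (intro sum.cong refl)
       (simp add: ww_def M_def L_mult wf_Mt_pos wf_mm L_smul[symmetric])
  also have "\<dots> = (1/24) *\<^sub>R (\<Sum>n<14. L (?f n))"
    by (simp add: scaleR_sum_right[symmetric] sum_pos14[where f = "\<lambda>n. L (?f n)"])
  also have "\<dots> = (1/24) *\<^sub>R L (lsum ?f 14)"
    using L_lsum[of 14 ?f] wfs by simp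
  also have "\<dots> = 0"
    using comp_cas2 pos14_lt[of k] by (simp add: list_all_iff L_zero7)
  finally show ?thesis .
qed

lemma cross7_0r: "cross7 u 0 = 0" by (simp add: cross7_def vec_eq_iff)
lemma cross7_0l: "cross7 0 w = 0" by (simp add: cross7_def vec_eq_iff)

lemma oct_mult_one_r: "oct_mult x (1, 0) = x"
  by (simp add: oct_mult_def cross7_0r prod_eq_iff)
lemma oct_mult_one_l: "oct_mult (1, 0) x = x"
  by (simp add: oct_mult_def cross7_0l prod_eq_iff)

lemma der_one:
  assumes "oct_derivation Der"
  shows "Der (1, 0) = 0"
proof -
  have "Der (oct_mult (1,0) (1,0)) = oct_mult (Der (1,0)) (1,0) + oct_mult (1,0) (Der (1,0))"
    using assms by (simp add: oct_derivation_def)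
  then have "Der (1,0) = Der (1,0) + Der (1,0)"
    by (simp add: oct_mult_one_r oct_mult_one_l)
  then show ?thesis by simp
qed

lemma der_rel:
  assumes D: "oct_derivation Der" and A: "\<forall>x. Der (0, x) = (0, A *v x)"
  shows "A *v cross7 u w = cross7 (A *v u) w + cross7 u (A *v w)
     \<and> inner (A *v u) w + inner u (A *v w) = 0"
proof -
  have lin: "linear Der" using D by (simp add: oct_derivation_def)
  have e: "oct_mult (0,u) (0,w) = (- inner u w) *\<^sub>R (1::real, 0::real^7) + (0, cross7 u w)"
    by (simp add: oct_mult_def)
  have "Der (oct_mult (0,u) (0,w)) = Der ((- inner u w) *\<^sub>R (1::real, 0::real^7) + (0, cross7 u w))"
    by (simp only: e)
  also have "\<dots> = Der ((- inner u w) *\<^sub>R (1::real, 0::real^7)) + Der (0, cross7 u w)"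
    by (rule linear_add[OF lin])
  also have "\<dots> = (- inner u w) *\<^sub>R Der (1, 0) + Der (0, cross7 u w)"
    by (simp only: linear_scale[OF lin])
  also have "\<dots> = (0, A *v cross7 u w)"
    using der_one[OF D] A by simp
  finally have l: "Der (oct_mult (0,u) (0,w)) = (0, A *v cross7 u w)" .
  have "Der (oct_mult (0,u) (0,w)) = oct_mult (Der (0,u)) (0,w) + oct_mult (0,u) (Der (0,w))"
    using D by (simp add: oct_derivation_def)
  also have "\<dots> = (- inner (A *v u) w - inner u (A *v w), cross7 (A *v u) w + cross7 u (A *v w))"
    using A by (simp add: oct_mult_def)
  finally show ?thesis using l by (simp add: prod_eq_iff)
qed

lemma mv_axis: "(A *v axis a 1) $ b = A $ b $ (a::'n::finite)"
  for A :: "real^'n^'m"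
  by (simp add: matrix_vector_mult_basis column_def)

lemma cross_axis_l: "cross7 (axis a 1) y $ l = (\<Sum>j\<in>UNIV. oct_eps a j l * y $ j)"
proof -
  have "cross7 (axis a 1) y $ l = (\<Sum>i\<in>UNIV. if i = a then (\<Sum>j\<in>UNIV. oct_eps a j l * y $ j) else 0)"
    unfolding cross7_def vec_lambda_beta by (intro sum.cong refl) (simp add: axis_def)
  then show ?thesis by simp
qed

lemma cross_axis_axis: "cross7 (axis a 1) (axis b 1) $ k = oct_eps a b k"
proof -
  have "cross7 (axis a 1) (axis b 1) $ k = (\<Sum>j\<in>UNIV. if j = b then oct_eps a b k else 0)"
    unfolding cross_axis_l by (intro sum.cong refl) (simp add: axis_def)
  then show ?thesis by simp
qed

lemma cross_axis_r: "cross7 x (axis b 1) $ l = (\<Sum>i\<in>UNIV. oct_eps i b l * x $ i)"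
proof -
  have "cross7 x (axis b 1) $ l = (\<Sum>i\<in>UNIV. (\<Sum>j\<in>UNIV. if j = b then oct_eps i b l * x $ i else 0))"
    unfolding cross7_def vec_lambda_beta by (intro sum.cong refl) (simp add: axis_def)
  then show ?thesis by simp
qed

lemma oct_pos_triple_iff:
  "oct_pos_triple i j k \<longleftrightarrow> (j = i + 1 \<and> k = i + 3) \<or> (j = i + 2 \<and> k = i + 6) \<or> (j = i + 4 \<and> k = i + 5)"
  unfolding oct_pos_triple_def
proof
  assume "\<exists>n. (i, j, k) = (n, n + 1, n + 3) \<or> (i, j, k) = (n + 1, n + 3, n) \<or> (i, j, k) = (n + 3, n, n + 1)"
  then obtain n where "(i, j, k) = (n, n + 1, n + 3) \<or> (i, j, k) = (n + 1, n + 3, n) \<or> (i, j, k) = (n + 3, n, n + 1)" by blast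
  then show "(j = i + 1 \<and> k = i + 3) \<or> (j = i + 2 \<and> k = i + 6) \<or> (j = i + 4 \<and> k = i + 5)"
  proof (elim disjE)
    assume "(i, j, k) = (n, n + 1, n + 3)" then show ?thesis by simp
  next
    assume h: "(i, j, k) = (n + 1, n + 3, n)"
    have "(n::7) = n + 1 + 6" by (simp add: add.assoc)
    then show ?thesis using h by (simp add: add.assoc)
  next
    assume h: "(i, j, k) = (n + 3, n, n + 1)"
    have "(n::7) = n + 3 + 4" "(n::7) + 1 = n + 3 + 5" by (simp_all add: add.assoc)
    then show ?thesis using h by (simp add: add.assoc)
  qed
next
  assume "(j = i + 1 \<and> k = i + 3) \<or> (j = i + 2 \<and> k = i + 6) \<or> (j = i + 4 \<and> k = i + 5)"
  then show "\<exists>n. (i, j, k) = (n, n + 1, n + 3) \<or> (i, j, k) = (n + 1, n + 3, n) \<or> (i, j, k) = (n + 3, n, n + 1)"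
  proof (elim disjE)
    assume "j = i + 1 \<and> k = i + 3" then show ?thesis by auto
  next
    assume h: "j = i + 2 \<and> k = i + 6"
    have "i + 6 + 1 = i" "i + 6 + 3 = i + 2" by (simp_all add: add.assoc)
    then show ?thesis using h by (intro exI[of _ "i + 6"]) simp
  next
    assume h: "j = i + 4 \<and> k = i + 5"
    have "i + 4 + 3 = i" "i + 4 + 1 = i + 5" by (simp_all add: add.assoc)
    then show ?thesis using h by (intro exI[of _ "i + 4"]) simp
  qed
qed

lemma der_rel3:
  assumes D: "oct_derivation Der" and A: "\<forall>x. Der (0, x) = (0, A *v x)"
  shows "(\<Sum>k\<in>UNIV. A$l$k * oct_eps a b k) = (\<Sum>i\<in>UNIV. oct_eps i b l * A$i$a) + (\<Sum>j\<in>UNIV. oct_eps a j l * A$j$b)"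
proof -
  have e: "(A *v cross7 (axis a 1) (axis b 1)) $ l = (cross7 (A *v axis a 1) (axis b 1)) $ l + (cross7 (axis a 1) (A *v axis b 1)) $ l"
    using der_rel[OF D A, of "axis a 1" "axis b 1"] by simp
  have c1: "(A *v cross7 (axis a 1) (axis b 1)) $ l = (\<Sum>k\<in>UNIV. A$l$k * oct_eps a b k)"
    by (simp add: matrix_vector_mult_def cross_axis_axis)
  have c2: "(cross7 (A *v axis a 1) (axis b 1)) $ l = (\<Sum>i\<in>UNIV. oct_eps i b l * A$i$a)"
    by (simp only: cross_axis_r mv_axis)
  have c3: "(cross7 (axis a 1) (A *v axis b 1)) $ l = (\<Sum>j\<in>UNIV. oct_eps a j l * A$j$b)"
    by (simp only: cross_axis_l mv_axis)
  show ?thesis using e c1 c2 c3 by simp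
qed

lemma der_antisym:
  assumes D: "oct_derivation Der" and A: "\<forall>x. Der (0, x) = (0, A *v x)"
  shows "A $ a $ b = - A $ b $ a"
proof -
  have "inner (A *v axis b 1) (axis a 1) + inner (axis b 1) (A *v axis a 1) = 0"
    using der_rel[OF D A] by blast
  then show ?thesis by (simp add: inner_axis inner_axis' mv_axis)
qed

definition coef :: "real^7^7 \<Rightarrow> 14 \<Rightarrow> real" where
  "coef A j = (let n = pos14 j; k = (of_nat (n div 2) :: 7) in
     if even n then A$(k+4)$(k+5) + A$(k+2)$(k+6) / 2 else - A$(k+2)$(k+6) / 2)"

lemma red7: "(7::7) = 0" "(8::7) = 1" "(9::7) = 2" "(10::7) = 3" "(11::7) = 4" "(12::7) = 5"
  by simp_all

lemma g2_D_span:
  assumes "A \<in> g2_D"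
  shows "A = (\<Sum>j\<in>UNIV. coef A j *\<^sub>R M j)"
proof -
  obtain Der where D: "oct_derivation Der" and DA: "\<forall>x. Der (0, x) = (0, A *v x)"
    using assms by (auto simp: g2_D_def)
  note as = der_antisym[OF D DA]
  note r3 = der_rel3[OF D DA]
  have low: "A$ 1 $ 0 = - A$ 0 $ 1" "A$ 2 $ 0 = - A$ 0 $ 2" "A$ 2 $ 1 = - A$ 1 $ 2" "A$ 3 $ 0 = - A$ 0 $ 3" "A$ 3 $ 1 = - A$ 1 $ 3" "A$ 3 $ 2 = - A$ 2 $ 3" "A$ 4 $ 0 = - A$ 0 $ 4" "A$ 4 $ 1 = - A$ 1 $ 4" "A$ 4 $ 2 = - A$ 2 $ 4" "A$ 4 $ 3 = - A$ 3 $ 4" "A$ 5 $ 0 = - A$ 0 $ 5" "A$ 5 $ 1 = - A$ 1 $ 5" "A$ 5 $ 2 = - A$ 2 $ 5" "A$ 5 $ 3 = - A$ 3 $ 5" "A$ 5 $ 4 = - A$ 4 $ 5" "A$ 6 $ 0 = - A$ 0 $ 6" "A$ 6 $ 1 = - A$ 1 $ 6" "A$ 6 $ 2 = - A$ 2 $ 6" "A$ 6 $ 3 = - A$ 3 $ 6" "A$ 6 $ 4 = - A$ 4 $ 6" "A$ 6 $ 5 = - A$ 5 $ 6"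
    by (rule as)+
  have dg: "A$ 0 $ 0 = 0" "A$ 1 $ 1 = 0" "A$ 2 $ 2 = 0" "A$ 3 $ 3 = 0" "A$ 4 $ 4 = 0" "A$ 5 $ 5 = 0" "A$ 6 $ 6 = 0"
    using as[of 0 0] as[of 1 1] as[of 2 2] as[of 3 3] as[of 4 4] as[of 5 5] as[of 6 6] by simp_all
  have phi0: "A$ 1 $ 3 = - A$ 4 $ 5 - A$ 2 $ 6"
    using r3[of 5 1 2] by (simp add: sum_7 oct_eps_def oct_pos_triple_iff low dg)
  have phi1: "A$ 2 $ 4 = - A$ 5 $ 6 + A$ 0 $ 3"
    using r3[of 5 0 2] by (simp add: sum_7 oct_eps_def oct_pos_triple_iff low dg)
  have phi2: "A$ 3 $ 5 = A$ 0 $ 6 + A$ 1 $ 4"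
    using r3[of 5 0 1] by (simp add: sum_7 oct_eps_def oct_pos_triple_iff low dg)
  have phi3: "A$ 4 $ 6 = - A$ 0 $ 1 + A$ 2 $ 5"
    using r3[of 4 0 2] by (simp add: sum_7 oct_eps_def oct_pos_triple_iff low dg)
  have phi4: "A$ 0 $ 5 = A$ 1 $ 2 - A$ 3 $ 6"
    using r3[of 6 0 1] by (simp add: sum_7 oct_eps_def oct_pos_triple_iff low dg)
  have phi5: "A$ 1 $ 6 = A$ 2 $ 3 + A$ 0 $ 4"
    using r3[of 2 0 1] by (simp add: sum_7 oct_eps_def oct_pos_triple_iff low dg)
  have phi6: "A$ 0 $ 2 = - A$ 3 $ 4 - A$ 1 $ 5"
    using r3[of 4 0 1] by (simp add: sum_7 oct_eps_def oct_pos_triple_iff low dg)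
  show ?thesis
    unfolding vec_eq_iff forall_7
    by (simp add: sum_component sum_14 M_def L_comp pos14_simps pos7_simps Mt_def coef_def Let_def red7 low dg phi0 phi1 phi2 phi3 phi4 phi5 phi6)
qed

subsection \<open>Generic matrix algebra\<close>

lemma mmul_add_l: "((A::'a::semiring_1^'n^'m) + B) ** C = A ** C + B ** C"
  by (simp add: vec_eq_iff matrix_matrix_mult_def sum.distrib distrib_right)
lemma mmul_add_r: "(C::'a::semiring_1^'n^'m) ** (A + B) = C ** A + C ** B"
  by (simp add: vec_eq_iff matrix_matrix_mult_def sum.distrib distrib_left)
lemma mmul_zero_l: "(0::'a::semiring_1^'n^'m) ** (C::'a^'k^'n) = 0"
  by (simp add: vec_eq_iff matrix_matrix_mult_def)
lemma mmul_zero_r: "(C::'a::semiring_1^'n^'m) ** (0::'a^'k^'n) = 0"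
  by (simp add: vec_eq_iff matrix_matrix_mult_def)
lemma mmul_scale_l: "((c::real) *\<^sub>R (A::'a::real_algebra_1^'n^'m)) ** B = c *\<^sub>R (A ** B)"
  by (simp add: scalar_matrix_assoc)
lemma mmul_scale_r: "(A::'a::real_algebra_1^'n^'m) ** ((c::real) *\<^sub>R B) = c *\<^sub>R (A ** B)"
  by (simp add: vec_eq_iff matrix_matrix_mult_def scaleR_sum_right)

lemma mmul_sum_l: "(\<Sum>i\<in>S. f i) ** (C::'a::semiring_1^'k^'n) = (\<Sum>i\<in>S. f i ** C)"
  by (induction S rule: infinite_finite_induct) (simp_all add: mmul_zero_l mmul_add_l)
lemma mmul_sum_r: "(C::'a::semiring_1^'n^'m) ** (\<Sum>i\<in>S. f i) = (\<Sum>i\<in>S. C ** f i)"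
  by (induction S rule: infinite_finite_induct) (simp_all add: mmul_zero_r mmul_add_r)

lemma trace_add: "trace ((A::'a::semiring_1^'n^'n) + B) = trace A + trace B"
  by (simp add: trace_def sum.distrib)
lemma trace_scale: "trace ((c::real) *\<^sub>R (A::real^'n^'n)) = c * trace A"
  by (simp add: trace_def sum_distrib_left)
lemma trace_0: "trace (0::'a::semiring_1^'n^'n) = 0"
  by (simp add: trace_def)
lemma trace_sum: "trace (\<Sum>i\<in>S. (f i::'a::semiring_1^'n^'n)) = (\<Sum>i\<in>S. trace (f i))"
  by (induction S rule: infinite_finite_induct) (simp_all add: trace_add trace_0)

lemma sum_if_delta_l: "(\<Sum>k\<in>UNIV. (if j = k then d else 0) * (y k::real)) = d * y j"
  for j :: "'a::finite"
proof -
  have "(\<Sum>k\<in>UNIV. (if j = k then d else 0) * y k) = (\<Sum>k\<in>UNIV. if k = j then d * y j else 0)"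
    by (intro sum.cong refl) auto
  then show ?thesis by (simp add: sum.delta)
qed

subsection \<open>The real computation\<close>

lemma bilin_expand:
  fixes c :: "14 \<Rightarrow> 14 \<Rightarrow> real" and X :: "real^7^7"
  shows "(\<Sum>j\<in>UNIV. c a j *\<^sub>R M j) ** X ** (\<Sum>k\<in>UNIV. c b k *\<^sub>R M k)
     = (\<Sum>j\<in>UNIV. \<Sum>k\<in>UNIV. (c a j * c b k) *\<^sub>R (M j ** X ** M k))"
  unfolding mmul_sum_l unfolding mmul_sum_r by (simp add: mmul_scale_l mmul_scale_r mult.commute)

lemma key_orth:
  fixes A :: "14 \<Rightarrow> real^7^7" and c :: "14 \<Rightarrow> 14 \<Rightarrow> real"
  assumes tr: "\<And>a b. trace (A a ** A b) = (if a = b then -1/2 else 0)"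
    and sp: "\<And>a. A a = (\<Sum>j\<in>UNIV. c a j *\<^sub>R M j)"
  shows "(\<Sum>a\<in>UNIV. c a j * c a k) = (if j = k then ww j else 0)"
proof -
  have T: "(\<Sum>j\<in>UNIV. c a j * c b j * gg j) = (if a = b then 1/2 else 0)" for a b
  proof -
    have "A a ** A b = (\<Sum>j\<in>UNIV. \<Sum>k\<in>UNIV. (c a j * c b k) *\<^sub>R (M j ** M k))"
      using bilin_expand[of c a "mat 1" b] sp[of a] sp[of b] by simp
    then have "trace (A a ** A b) = (\<Sum>j\<in>UNIV. \<Sum>k\<in>UNIV. (c a j * c b k) * trace (M j ** M k))"
      by (simp add: trace_sum trace_scale)
    also have "\<dots> = (\<Sum>j\<in>UNIV. - (c a j * c b j * gg j))"
      by (intro sum.cong refl) (simp add: M_orth if_distrib[of "\<lambda>x. _ * x"] cong: if_cong)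
    finally show ?thesis using tr[of a b] by (simp add: sum_negf split: if_splits)
  qed
  define Cm :: "real^14^14" where "Cm = (\<chi> a j. c a j)"
  define Dm :: "real^14^14" where "Dm = (\<chi> j k. if j = k then 2 * gg j else 0)"
  have "Cm ** (Dm ** transpose Cm) = mat 1"
  proof -
    have "(Cm ** (Dm ** transpose Cm)) $ a $ b = mat 1 $ a $ b" for a b
    proof -
      have "(Cm ** (Dm ** transpose Cm)) $ a $ b = (\<Sum>j\<in>UNIV. c a j * (2 * gg j * c b j))"
        by (simp add: Cm_def Dm_def matrix_matrix_mult_def transpose_def sum_if_delta_l)
      also have "\<dots> = 2 * (\<Sum>j\<in>UNIV. c a j * c b j * gg j)"
        by (simp add: sum_distrib_left mult_ac)
      also have "\<dots> = mat 1 $ a $ b"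
        by (simp add: T mat_def)
      finally show ?thesis .
    qed
    then show ?thesis by (simp add: vec_eq_iff)
  qed
  then have "(Dm ** transpose Cm) ** Cm = mat 1"
    using matrix_left_right_inverse by blast
  then have "((Dm ** transpose Cm) ** Cm) $ j $ k = mat 1 $ j $ k" by simp
  moreover have "((Dm ** transpose Cm) ** Cm) $ j $ k = 2 * gg j * (\<Sum>a\<in>UNIV. c a j * c a k)"
  proof -
    have "((Dm ** transpose Cm) ** Cm) $ j $ k = (\<Sum>a\<in>UNIV. (\<Sum>m\<in>UNIV. (if j = m then 2 * gg j else 0) * c a m) * c a k)"
      by (simp add: Cm_def Dm_def matrix_matrix_mult_def transpose_def)
    also have "\<dots> = (\<Sum>a\<in>UNIV. 2 * gg j * c a j * c a k)"
      by (simp add: sum_if_delta_l)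
    also have "\<dots> = 2 * gg j * (\<Sum>a\<in>UNIV. c a j * c a k)"
      by (simp add: sum_distrib_left mult_ac)
    finally show ?thesis .
  qed
  ultimately have "2 * gg j * (\<Sum>a\<in>UNIV. c a j * c a k) = (if j = k then 1 else 0)"
    by (simp add: mat_def)
  then show ?thesis
    using gg_pos[of j] by (auto simp: ww_gg field_simps split: if_splits)
qed

lemma key_sandwich:
  fixes A :: "14 \<Rightarrow> real^7^7" and c :: "14 \<Rightarrow> 14 \<Rightarrow> real"
  assumes tr: "\<And>a b. trace (A a ** A b) = (if a = b then -1/2 else 0)"
    and sp: "\<And>a. A a = (\<Sum>j\<in>UNIV. c a j *\<^sub>R M j)"
  shows "(\<Sum>a\<in>UNIV. A a ** X ** A a) = (\<Sum>j\<in>UNIV. ww j *\<^sub>R (M j ** X ** M j))"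
proof -
  have e: "A a ** X ** A a = (\<Sum>j\<in>UNIV. \<Sum>k\<in>UNIV. (c a j * c a k) *\<^sub>R (M j ** X ** M k))" for a
    using bilin_expand[of c a X a] sp[of a] by simp
  have "(\<Sum>a\<in>UNIV. A a ** X ** A a) = (\<Sum>a\<in>UNIV. \<Sum>j\<in>UNIV. \<Sum>k\<in>UNIV. (c a j * c a k) *\<^sub>R (M j ** X ** M k))"
    by (simp only: e)
  also have "\<dots> = (\<Sum>j\<in>UNIV. \<Sum>a\<in>UNIV. \<Sum>k\<in>UNIV. (c a j * c a k) *\<^sub>R (M j ** X ** M k))"
    by (rule sum.swap)
  also have "\<dots> = (\<Sum>j\<in>UNIV. \<Sum>k\<in>UNIV. \<Sum>a\<in>UNIV. (c a j * c a k) *\<^sub>R (M j ** X ** M k))"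
    by (rule sum.cong[OF refl], rule sum.swap)
  also have "\<dots> = (\<Sum>j\<in>UNIV. \<Sum>k\<in>UNIV. (\<Sum>a\<in>UNIV. c a j * c a k) *\<^sub>R (M j ** X ** M k))"
    by (simp only: scaleR_sum_left)
  also have "\<dots> = (\<Sum>j\<in>UNIV. \<Sum>k\<in>UNIV. (if j = k then ww j *\<^sub>R (M j ** X ** M j) else 0))"
    by (intro sum.cong refl) (simp add: key_orth[OF tr sp])
  also have "\<dots> = (\<Sum>j\<in>UNIV. ww j *\<^sub>R (M j ** X ** M j))"
    by simp
  finally show ?thesis .
qed

lemma real_main:
  fixes A :: "14 \<Rightarrow> real^7^7"
  assumes tr: "\<And>a b. trace (A a ** A b) = (if a = b then -1/2 else 0)"
    and inD: "\<And>a. A a \<in> g2_D"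
  shows "(\<Sum>a\<in>UNIV. A a ** A a) = - mat 1"
    and "(\<Sum>a\<in>UNIV. A a ** A b ** A a) = 0"
proof -
  define c where "c a j = coef (A a) j" for a j
  have sp: "\<And>a. A a = (\<Sum>j\<in>UNIV. c a j *\<^sub>R M j)"
    unfolding c_def using g2_D_span[OF inD] by blast
  have "(\<Sum>a\<in>UNIV. A a ** A a) = (\<Sum>a\<in>UNIV. A a ** mat 1 ** A a)" by simp
  also have "\<dots> = (\<Sum>j\<in>UNIV. ww j *\<^sub>R (M j ** mat 1 ** M j))"
    by (rule key_sandwich[OF tr sp])
  also have "\<dots> = - mat 1" using cas1 by simp
  finally show "(\<Sum>a\<in>UNIV. A a ** A a) = - mat 1" .
  have inner: "M j ** (\<Sum>k\<in>UNIV. c b k *\<^sub>R M k) ** M j = (\<Sum>k\<in>UNIV. c b k *\<^sub>R (M j ** M k ** M j))" for j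
    unfolding mmul_sum_r unfolding mmul_sum_l by (simp add: mmul_scale_l mmul_scale_r)
  have "(\<Sum>a\<in>UNIV. A a ** A b ** A a) = (\<Sum>j\<in>UNIV. ww j *\<^sub>R (M j ** A b ** M j))"
    by (rule key_sandwich[OF tr sp])
  also have "\<dots> = (\<Sum>j\<in>UNIV. ww j *\<^sub>R (\<Sum>k\<in>UNIV. c b k *\<^sub>R (M j ** M k ** M j)))"
    by (subst sp[of b]) (simp only: inner)
  also have "\<dots> = (\<Sum>j\<in>UNIV. \<Sum>k\<in>UNIV. c b k *\<^sub>R (ww j *\<^sub>R (M j ** M k ** M j)))"
    by (simp only: scaleR_sum_right scaleR_scaleR mult.commute)
  also have "\<dots> = (\<Sum>k\<in>UNIV. \<Sum>j\<in>UNIV. c b k *\<^sub>R (ww j *\<^sub>R (M j ** M k ** M j)))"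
    by (rule sum.swap)
  also have "\<dots> = (\<Sum>k\<in>UNIV. c b k *\<^sub>R (\<Sum>j\<in>UNIV. ww j *\<^sub>R (M j ** M k ** M j)))"
    by (simp only: scaleR_sum_right)
  also have "\<dots> = 0" by (simp add: cas2)
  finally show "(\<Sum>a\<in>UNIV. A a ** A b ** A a) = 0" .
qed

subsection \<open>Complexification\<close>

definition iM :: "real^7^7 \<Rightarrow> complex^7^7" where
  "iM X = (\<chi> r s. \<i> * complex_of_real (X$r$s))"
definition cR :: "real^7^7 \<Rightarrow> complex^7^7" where
  "cR X = (\<chi> r s. complex_of_real (X$r$s))"

lemma iM_mult: "iM X ** iM Y = - cR (X ** Y)"
proof -
  have "(iM X ** iM Y) $ r $ s = (- cR (X ** Y)) $ r $ s" for r s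
  proof -
    have "(iM X ** iM Y) $ r $ s = (\<Sum>t\<in>UNIV. - complex_of_real (X$r$t * Y$t$s))"
      unfolding matrix_matrix_mult_def vec_lambda_beta by (intro sum.cong refl) (simp add: iM_def mult.assoc mult.left_commute)
    also have "\<dots> = (- cR (X ** Y)) $ r $ s"
      by (simp add: cR_def matrix_matrix_mult_def sum_negf)
    finally show ?thesis .
  qed
  then show ?thesis by (simp add: vec_eq_iff)
qed

lemma cR_iM_mult: "cR X ** iM Y = iM (X ** Y)"
proof -
  have "(cR X ** iM Y) $ r $ s = iM (X ** Y) $ r $ s" for r s
  proof -
    have "(cR X ** iM Y) $ r $ s = (\<Sum>t\<in>UNIV. \<i> * complex_of_real (X$r$t * Y$t$s))"
      unfolding matrix_matrix_mult_def vec_lambda_beta by (intro sum.cong refl) (simp add: cR_def iM_def mult.assoc mult.left_commute)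
    also have "\<dots> = iM (X ** Y) $ r $ s"
      by (simp add: iM_def matrix_matrix_mult_def sum_distrib_left)
    finally show ?thesis .
  qed
  then show ?thesis by (simp add: vec_eq_iff)
qed

lemma mmul_neg_l: "(- (A::'a::ring_1^'n^'m)) ** B = - (A ** B)"
  by (simp add: vec_eq_iff matrix_matrix_mult_def sum_negf)

lemma cR_neg: "cR (- X) = - cR X"
  by (simp add: cR_def vec_eq_iff)
lemma iM_neg: "iM (- X) = - iM X"
  by (simp add: iM_def vec_eq_iff)
lemma cR_mat1: "cR (mat 1) = mat 1"
  by (simp add: cR_def mat_def vec_eq_iff)
lemma iM_zero: "iM 0 = 0"
  by (simp add: iM_def vec_eq_iff)
lemma cR_sum: "cR (\<Sum>i\<in>S. f i) = (\<Sum>i\<in>S. cR (f i))"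
  by (induction S rule: infinite_finite_induct) (simp_all add: cR_def vec_eq_iff)
lemma iM_sum: "iM (\<Sum>i\<in>S. f i) = (\<Sum>i\<in>S. iM (f i))"
  by (induction S rule: infinite_finite_induct) (simp_all add: iM_def vec_eq_iff distrib_left)
lemma trace_neg: "trace (- (X::'a::ring_1^'n^'n)) = - trace X"
  by (simp add: trace_def sum_negf)
lemma trace_cR: "trace (cR X) = complex_of_real (trace X)"
  by (simp add: trace_def cR_def)

lemma complex_main:
  fixes \<beta> :: "14 \<Rightarrow> complex^7^7"
  assumes basis: "is_real_basis_of \<beta> g2_iD"
    and orth: "\<forall>a b. trace (\<beta> a ** \<beta> b) = (if a = b then 1/2 else 0)"
  shows "(\<Sum>i\<in>UNIV. \<beta> i ** \<beta> i) = mat 1"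
    and "(\<Sum>i\<in>UNIV. \<beta> i ** \<beta> a ** \<beta> i) = 0"
proof -
  have "\<forall>i. \<exists>X. \<beta> i = iM X \<and> X \<in> g2_D"
    using basis unfolding is_real_basis_of_def g2_iD_def iM_def by blast
  then obtain A where A: "\<And>i. \<beta> i = iM (A i)" and AD: "\<And>i. A i \<in> g2_D"
    by metis
  have tr: "trace (A a ** A b) = (if a = b then -1/2 else 0)" for a b
  proof -
    have "trace (\<beta> a ** \<beta> b) = - complex_of_real (trace (A a ** A b))"
      by (simp add: A iM_mult trace_neg trace_cR)
    then have "- complex_of_real (trace (A a ** A b)) = (if a = b then 1/2 else 0)"
      using orth by simp
    then have "complex_of_real (trace (A a ** A b)) = - (if a = b then 1/2 else 0)"
      by (metis minus_minus)
    then have "complex_of_real (trace (A a ** A b)) = complex_of_real (if a = b then -1/2 else 0)"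
      by simp
    then show ?thesis by (simp only: of_real_eq_iff)
  qed
  have r1: "(\<Sum>i\<in>UNIV. A i ** A i) = - mat 1" and r2: "(\<Sum>i\<in>UNIV. A i ** A a ** A i) = 0"
    using real_main[OF tr AD] by blast+
  have "(\<Sum>i\<in>UNIV. \<beta> i ** \<beta> i) = (\<Sum>i\<in>UNIV. - cR (A i ** A i))"
    by (simp add: A iM_mult)
  also have "\<dots> = - cR (\<Sum>i\<in>UNIV. A i ** A i)"
    by (simp add: cR_sum sum_negf)
  also have "\<dots> = mat 1"
    by (simp add: r1 cR_neg cR_mat1)
  finally show "(\<Sum>i\<in>UNIV. \<beta> i ** \<beta> i) = mat 1" .
  have "(\<Sum>i\<in>UNIV. \<beta> i ** \<beta> a ** \<beta> i) = (\<Sum>i\<in>UNIV. - iM (A i ** A a ** A i))"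
    by (intro sum.cong refl) (simp add: A iM_mult cR_iM_mult mmul_neg_l)
  also have "\<dots> = - iM (\<Sum>i\<in>UNIV. A i ** A a ** A i)"
    by (simp add: iM_sum sum_negf)
  also have "\<dots> = 0"
    by (simp add: r2 iM_zero)
  finally show "(\<Sum>i\<in>UNIV. \<beta> i ** \<beta> a ** \<beta> i) = 0" .
qed

lemma chan_alg:
  fixes I V :: "'a::real_vector"
  shows "(1 - p) *\<^sub>R ((1/7) *\<^sub>R (I + V)) + p *\<^sub>R ((1/7) *\<^sub>R I) = (1/7) *\<^sub>R (I + (1 - p) *\<^sub>R V)"
proof -
  have "(1 - p) *\<^sub>R ((1/7) *\<^sub>R (I + V)) + p *\<^sub>R ((1/7) *\<^sub>R I) = ((1 - p) / 7 + p / 7) *\<^sub>R I + ((1 - p) / 7) *\<^sub>R V"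
    by (simp add: scaleR_add_right scaleR_add_left algebra_simps)
  also have "(1 - p) / 7 + p / 7 = (1/7::real)"
    by (simp add: field_simps)
  finally show ?thesis by (simp add: scaleR_add_right)
qed

theorem mainTheorem12:
  fixes \<beta> :: "14 \<Rightarrow> complex^7^7"
  assumes basis: "is_real_basis_of \<beta> g2_iD"
    and orth: "\<forall>a b. trace (\<beta> a ** \<beta> b) = (if a = b then 1/2 else 0)"
  shows "(\<Sum>i\<in>UNIV. \<beta> i ** \<beta> i) = mat 1
    \<and> (\<forall>a. (\<Sum>i\<in>UNIV. \<beta> i ** \<beta> a ** \<beta> i) = 0)
    \<and> (\<forall>p::real. 0 \<le> p \<and> p \<le> 1 \<longrightarrow> (\<forall>v::real^14.
         g2_channel \<beta> p ((1/7) *\<^sub>R (mat 1 + vdot_beta v \<beta>))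
           = (1/7) *\<^sub>R (mat 1 + (1 - p) *\<^sub>R vdot_beta v \<beta>)))"
proof -
  note c1 = complex_main(1)[OF basis orth]
  note c2 = complex_main(2)[OF basis orth]
  have ch: "g2_channel \<beta> p ((1/7) *\<^sub>R (mat 1 + vdot_beta v \<beta>))
           = (1/7) *\<^sub>R (mat 1 + (1 - p) *\<^sub>R vdot_beta v \<beta>)" for p v
  proof -
    have sw: "(\<Sum>i\<in>UNIV. \<beta> i ** vdot_beta v \<beta> ** \<beta> i) = 0"
    proof -
      have "(\<Sum>i\<in>UNIV. \<beta> i ** vdot_beta v \<beta> ** \<beta> i)
          = (\<Sum>i\<in>UNIV. \<Sum>a\<in>UNIV. v$a *\<^sub>R (\<beta> i ** \<beta> a ** \<beta> i))"
        unfolding vdot_beta_def mmul_sum_r mmul_sum_l by (simp add: mmul_scale_l mmul_scale_r)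
      also have "\<dots> = (\<Sum>a\<in>UNIV. \<Sum>i\<in>UNIV. v$a *\<^sub>R (\<beta> i ** \<beta> a ** \<beta> i))"
        by (rule sum.swap)
      also have "\<dots> = (\<Sum>a\<in>UNIV. v$a *\<^sub>R (\<Sum>i\<in>UNIV. \<beta> i ** \<beta> a ** \<beta> i))"
        by (simp only: scaleR_sum_right)
      also have "\<dots> = 0" by (simp add: c2)
      finally show ?thesis .
    qed
    have ti: "\<beta> i ** ((1/7) *\<^sub>R (mat 1 + vdot_beta v \<beta>)) ** \<beta> i
        = (1/7) *\<^sub>R (\<beta> i ** \<beta> i + \<beta> i ** vdot_beta v \<beta> ** \<beta> i)" for i
      by (simp add: mmul_scale_l mmul_scale_r mmul_add_l mmul_add_r)
    have "(\<Sum>i\<in>UNIV. \<beta> i ** ((1/7) *\<^sub>R (mat 1 + vdot_beta v \<beta>)) ** \<beta> i)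
        = (1/7) *\<^sub>R ((\<Sum>i\<in>UNIV. \<beta> i ** \<beta> i) + (\<Sum>i\<in>UNIV. \<beta> i ** vdot_beta v \<beta> ** \<beta> i))"
      by (simp only: ti scaleR_sum_right[symmetric] sum.distrib)
    also have "\<dots> = (1/7) *\<^sub>R mat 1"
      by (simp add: c1 sw)
    finally have s: "(\<Sum>i\<in>UNIV. \<beta> i ** ((1/7) *\<^sub>R (mat 1 + vdot_beta v \<beta>)) ** \<beta> i) = (1/7) *\<^sub>R mat 1" .
    show ?thesis
      unfolding g2_channel_def s by (rule chan_alg)
  qed
  show ?thesis using c1 c2 ch by blast
qed

end
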